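(* (i) The ring homomorphism $$\phi:K\langle\mathbf x,\mathbf y\rangle^\dagger\to L^{\dagger\prime},\qquad\sum_{\mathbf v\in\mathbb Z^N_{\ge0}}f_{\mathbf v}(\mathbf x)\mathbf y^{\mathbf v}\mapsto\sum_{\mathbf v\in\mathbb Z^N_{\ge0}}f_{\mathbf v}(\mathbf x)\mathbf t^{v_1\mathbf w_1+\cdots+v_N\mathbf w_N}$$ is surjective. (ii) The homomorphism of left $\mathcal D^\dagger$-modules $$\varphi:\mathcal D^\dagger\to L^{\dagger\prime},\qquad\sum_{\mathbf v}f_{\mathbf v}(\mathbf x)\frac{\partial^{\mathbf v}}{\pi^{|\mathbf v|}}\mapsto\Big(\sum_{\mathbf v}f_{\mathbf v}(\mathbf x)\frac{\partial^{\mathbf v}}{\pi^{|\mathbf v|}}\Big)\cdot1=\sum_{\mathbf v}f_{\mathbf v}(\mathbf x)\mathbf t^{v_1\mathbf w_1+\cdots+v_N\mathbf w_N}$$ is surjective.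
   Context: Let $\mathbf w_1,\dots,\mathbf w_N\in\mathbb Z^n$ be the columns of an $n\times N$ integer matrix of rank $n$. $p$ a prime, $K$ a finite extension of $\mathbb Q_p$ containing $\pi$ with $\pi^{p-1}+p=0$, $|a|=p^{-\mathrm{ord}_p(a)}$. Multi-index notation $\mathbf x^{\mathbf v}$, $\mathbf y^{\mathbf v}$, $\mathbf t^{\mathbf w}$, $|\mathbf v|=\sum v_j$, $\partial^{\mathbf v}=\prod(\partial/\partial x_j)^{v_j}$. For $r>0$, $K\{r^{-1}\mathbf x\}$ = power series $\sum a_{\mathbf v}\mathbf x^{\mathbf v}$ with $|a_{\mathbf v}|r^{|\mathbf v|}$ bounded, norm $\|\cdot\|_r=\sup|a_{\mathbf v}|r^{|\mathbf v|}$. $K\langle\mathbf x,\mathbf y\rangle^\dagger=\bigcup_{r>1,s>1}\{\sum_{\mathbf v}f_{\mathbf v}(\mathbf x)\mathbf y^{\mathbf v}:f_{\mathbf v}\in K\{r^{-1}\mathbf x\},\ \|f_{\mathbf v}\|_rs^{|\mathbf v|}\text{ bounded}\}$. $\Delta$ = convex hull of $\{0,\mathbf w_j\}$, $\delta$ = cone generated by the $\mathbf w_j$, $d(\mathbf w)=\inf\{a>0:\mathbf w\in a\Delta\}$, $C(A)=\{\sum k_j\mathbf w_j:k_j\in\mathbb Z_{\ge0}\}$, $L^{\dagger\prime}=\bigcup_{r>1,s>1}\{\sum_{\mathbf w\in C(A)}a_{\mathbf w}(\mathbf x)\mathbf t^{\mathbf w}:a_{\mathbf w}\in K\{r^{-1}\mathbf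 x\},\ \|a_{\mathbf w}\|_rs^{d(\mathbf w)}\text{ bounded}\}$. $\mathcal D^\dagger=\bigcup_{r>1,s>1}\{\sum_{\mathbf v}f_{\mathbf v}(\mathbf x)\partial^{\mathbf v}/\pi^{|\mathbf v|}:f_{\mathbf v}\in K\{r^{-1}\mathbf x\},\ \|f_{\mathbf v}\|_rs^{|\mathbf v|}\text{ bounded}\}$; $L^{\dagger\prime}$ is a left $\mathcal D^\dagger$-module with $\partial/\partial x_j$ acting by $\partial/\partial x_j+\pi\mathbf t^{\mathbf w_j}$. *)

theory Defs
  imports "HOL-Analysis.Analysis"
begin

text \<open>Q_p is not available in the library, so "finite extension of Q_p
 with |a| = p^(-ord_p a)" is rendered by its standard characterisation: a field of
 characteristic 0, complete for a non-archimedean absolute value which is discrete,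
 has finite residue field, and is normalised by |p| = 1/p.\<close>

definition local_field_over_Qp :: "('a::field_char_0 \<Rightarrow> real) \<Rightarrow> nat \<Rightarrow> bool" where
  "local_field_over_Qp av p \<longleftrightarrow>
     av 0 = 0 \<and> (\<forall>x. x \<noteq> 0 \<longrightarrow> av x > 0) \<and>
     (\<forall>x y. av (x * y) = av x * av y) \<and>
     (\<forall>x y. av (x + y) \<le> max (av x) (av y)) \<and>
     av (of_nat p) = 1 / real p \<and>
     (\<forall>X :: nat \<Rightarrow> 'a.
        (\<forall>e>0. \<exists>M. \<forall>m\<ge>M. \<forall>k\<ge>M. av (X m - X k) < e) \<longrightarrow>
        (\<exists>L. \<forall>e>0. \<exists>M. \<forall>m\<ge>M. av (X m - L) < e)) \<and>
     (\<exists>uu. 0 < av uu \<and> av uu < 1 \<and> (\<forall>x. x \<noteq> 0 \<longrightarrow> (\<exists>k::int. av x = av uu powi k))) \<and>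
     finite ((\<lambda>x. {y. av y \<le> 1 \<and> av (y - x) < 1}) ` {x. av x \<le> 1})"

definition ksums :: "('a::ab_group_add \<Rightarrow> real) \<Rightarrow> ('i \<Rightarrow> 'a) \<Rightarrow> 'i set \<Rightarrow> 'a \<Rightarrow> bool" where
  "ksums av g S s \<longleftrightarrow>
     (\<forall>e>0. \<exists>F0. finite F0 \<and> F0 \<subseteq> S \<and>
        (\<forall>F. finite F \<and> F0 \<subseteq> F \<and> F \<subseteq> S \<longrightarrow> av (s - sum g F) < e))"

definition ksum :: "('a::ab_group_add \<Rightarrow> real) \<Rightarrow> ('i \<Rightarrow> 'a) \<Rightarrow> 'i set \<Rightarrow> 'a" where
  "ksum av g S = (THE s. ksums av g S s)"

text \<open>A power series in x is its coefficient function on multi-indices 'N \<Rightarrow> nat.\<close>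

definition mdeg :: "('N::finite \<Rightarrow> nat) \<Rightarrow> nat" where
  "mdeg v = (\<Sum>j\<in>UNIV. v j)"

definition in_Kr :: "('a \<Rightarrow> real) \<Rightarrow> real \<Rightarrow> (('N::finite \<Rightarrow> nat) \<Rightarrow> 'a) \<Rightarrow> bool" where
  "in_Kr av r f \<longleftrightarrow> bdd_above (range (\<lambda>u. av (f u) * r ^ mdeg u))"

definition xnorm :: "('a \<Rightarrow> real) \<Rightarrow> real \<Rightarrow> (('N::finite \<Rightarrow> nat) \<Rightarrow> 'a) \<Rightarrow> real" where
  "xnorm av r f = (SUP u. av (f u) * r ^ mdeg u)"

text \<open>K<x,y>^dagger: F v is the coefficient f_v(x) of y^v.\<close>
definition Kxy_dagger :: "('a \<Rightarrow> real) \<Rightarrow> (('N::finite \<Rightarrow> nat) \<Rightarrow> ('N \<Rightarrow> nat) \<Rightarrow> 'a) set" where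
  "Kxy_dagger av = {F. \<exists>r>1. \<exists>s>1. (\<forall>v. in_Kr av r (F v)) \<and>
      bdd_above (range (\<lambda>v. xnorm av r (F v) * s ^ mdeg v))}"

text \<open>D^dagger: P v is the coefficient f_v(x) of the operator \<partial>^v / \<piK>^|v|.\<close>
definition D_dagger :: "('a \<Rightarrow> real) \<Rightarrow> (('N::finite \<Rightarrow> nat) \<Rightarrow> ('N \<Rightarrow> nat) \<Rightarrow> 'a) set" where
  "D_dagger av = {P. \<exists>r>1. \<exists>s>1. (\<forall>v. in_Kr av r (P v)) \<and>
      bdd_above (range (\<lambda>v. xnorm av r (P v) * s ^ mdeg v))}"

text \<open>w j is the column vector w_j \<in> Z^n, coordinates indexed by 'n.\<close>

definition colvec :: "('N \<Rightarrow> 'n::finite \<Rightarrow> int) \<Rightarrow> 'N \<Rightarrow> real^'n" where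
  "colvec w j = (\<chi> i. real_of_int (w j i))"

definition Delta :: "('N \<Rightarrow> 'n::finite \<Rightarrow> int) \<Rightarrow> (real^'n) set" where
  "Delta w = convex hull (insert 0 (range (colvec w)))"

definition dfun :: "('N \<Rightarrow> 'n::finite \<Rightarrow> int) \<Rightarrow> ('n \<Rightarrow> int) \<Rightarrow> real" where
  "dfun w z = Inf {a. a > 0 \<and> (\<chi> i. real_of_int (z i)) \<in> (\<lambda>x. a *\<^sub>R x) ` Delta w}"

definition expo :: "('N::finite \<Rightarrow> 'n \<Rightarrow> int) \<Rightarrow> ('N \<Rightarrow> nat) \<Rightarrow> ('n \<Rightarrow> int)" where
  "expo w v = (\<lambda>i. \<Sum>j\<in>UNIV. int (v j) * w j i)"

definition CA :: "('N::finite \<Rightarrow> 'n \<Rightarrow> int) \<Rightarrow> ('n \<Rightarrow> int) set" where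
  "CA w = range (expo w)"

text \<open>L^{dagger'}: G z is the coefficient a_z(x) of t^z; G vanishes off C(A).\<close>
definition Ldagger :: "('a::zero \<Rightarrow> real) \<Rightarrow> ('N::finite \<Rightarrow> 'n::finite \<Rightarrow> int)
    \<Rightarrow> (('n \<Rightarrow> int) \<Rightarrow> ('N \<Rightarrow> nat) \<Rightarrow> 'a) set" where
  "Ldagger av w = {G. (\<forall>z. z \<notin> CA w \<longrightarrow> G z = (\<lambda>u. 0)) \<and>
      (\<exists>r>1. \<exists>s>1. (\<forall>z\<in>CA w. in_Kr av r (G z)) \<and>
         bdd_above ((\<lambda>z. xnorm av r (G z) * s powr dfun w z) ` CA w))}"

definition phi :: "('a::ab_group_add \<Rightarrow> real) \<Rightarrow> ('N::finite \<Rightarrow> 'n \<Rightarrow> int)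
    \<Rightarrow> (('N \<Rightarrow> nat) \<Rightarrow> ('N \<Rightarrow> nat) \<Rightarrow> 'a) \<Rightarrow> (('n \<Rightarrow> int) \<Rightarrow> ('N \<Rightarrow> nat) \<Rightarrow> 'a)" where
  "phi av w F = (\<lambda>z u. ksum av (\<lambda>v. F v u) {v. expo w v = z})"

definition xderiv :: "'N \<Rightarrow> (('N \<Rightarrow> nat) \<Rightarrow> 'a::semiring_1) \<Rightarrow> (('N \<Rightarrow> nat) \<Rightarrow> 'a)" where
  "xderiv j a = (\<lambda>u. of_nat (u j + 1) * a (u(j := u j + 1)))"

text \<open>d/dx_j acts as d/dx_j + piK t^(w_j)\<close>
definition Dop :: "'a::comm_ring_1 \<Rightarrow> ('N \<Rightarrow> 'n \<Rightarrow> int) \<Rightarrow> 'N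
    \<Rightarrow> (('n \<Rightarrow> int) \<Rightarrow> ('N \<Rightarrow> nat) \<Rightarrow> 'a) \<Rightarrow> (('n \<Rightarrow> int) \<Rightarrow> ('N \<Rightarrow> nat) \<Rightarrow> 'a)" where
  "Dop piK w j G = (\<lambda>z u. xderiv j (G z) u + piK * G (\<lambda>i. z i - w j i) u)"

text \<open>action of \<partial>^v = product over j of (Dop j)^(v j) (these operators commute)\<close>
definition dpow :: "'a::comm_ring_1 \<Rightarrow> ('N::finite \<Rightarrow> 'n \<Rightarrow> int) \<Rightarrow> ('N \<Rightarrow> nat)
    \<Rightarrow> (('n \<Rightarrow> int) \<Rightarrow> ('N \<Rightarrow> nat) \<Rightarrow> 'a) \<Rightarrow> (('n \<Rightarrow> int) \<Rightarrow> ('N \<Rightarrow> nat) \<Rightarrow> 'a)" where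
  "dpow piK w v = Finite_Set.fold (\<lambda>j h. (Dop piK w j ^^ v j) \<circ> h) id UNIV"

text \<open>(sum_v f_v(x) \<partial>^v / piK^|v|) . G, computed coefficientwise\<close>
definition act :: "('a::field \<Rightarrow> real) \<Rightarrow> 'a \<Rightarrow> ('N::finite \<Rightarrow> 'n \<Rightarrow> int)
    \<Rightarrow> (('N \<Rightarrow> nat) \<Rightarrow> ('N \<Rightarrow> nat) \<Rightarrow> 'a)
    \<Rightarrow> (('n \<Rightarrow> int) \<Rightarrow> ('N \<Rightarrow> nat) \<Rightarrow> 'a) \<Rightarrow> (('n \<Rightarrow> int) \<Rightarrow> ('N \<Rightarrow> nat) \<Rightarrow> 'a)" where
  "act av piK w P G = (\<lambda>z u. ksum av
      (\<lambda>v. \<Sum>u1\<in>{u1. \<forall>j. u1 j \<le> u j}.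
              P v u1 * inverse (piK ^ mdeg v) * dpow piK w v G z (\<lambda>j. u j - u1 j)) UNIV)"

definition oneL :: "('n \<Rightarrow> int) \<Rightarrow> ('N \<Rightarrow> nat) \<Rightarrow> 'a::{zero,one}" where
  "oneL = (\<lambda>z u. if z = (\<lambda>_. 0) \<and> u = (\<lambda>_. 0) then 1 else 0)"

definition varphi :: "('a::field \<Rightarrow> real) \<Rightarrow> 'a \<Rightarrow> ('N::finite \<Rightarrow> 'n \<Rightarrow> int)
    \<Rightarrow> (('N \<Rightarrow> nat) \<Rightarrow> ('N \<Rightarrow> nat) \<Rightarrow> 'a) \<Rightarrow> (('n \<Rightarrow> int) \<Rightarrow> ('N \<Rightarrow> nat) \<Rightarrow> 'a)" where
  "varphi av piK w P = act av piK w P oneL"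

end

theory Submission
  imports Defs
begin


lemma nat_incseq_subseq:
  fixes s :: "nat \<Rightarrow> nat"
  shows "\<exists>r. strict_mono r \<and> incseq (\<lambda>k. s (r k))"
proof -
  obtain f where f: "strict_mono f" "monoseq (\<lambda>n. s (f n))" using seq_monosub by blast
  show ?thesis
  proof (cases "\<forall>m n. m \<le> n \<longrightarrow> s (f m) \<le> s (f n)")
    case True
    then show ?thesis using f by (auto simp: incseq_def)
  next
    case False
    then have dec: "\<And>m n. m \<le> n \<Longrightarrow> s (f n) \<le> s (f m)" using f(2) unfolding monoseq_def by blast
    define t where "t = (\<lambda>n. s (f n))"
    obtain m where m: "\<And>n. t m \<le> t n"
      using ex_has_least_nat[of "\<lambda>x. True" 0 t] by auto
    have c: "\<And>n. n \<ge> m \<Longrightarrow> t n = t m" using dec m unfolding t_def by (meson antisym)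
    have "strict_mono (\<lambda>k. f (k + m))" using f(1) by (simp add: strict_mono_def)
    moreover have "incseq (\<lambda>k. s (f (k + m)))"
      using c unfolding t_def incseq_def by (metis le_add2 order_refl)
    ultimately show ?thesis by blast
  qed
qed

lemma dickson_subseq:
  fixes f :: "nat \<Rightarrow> 'I \<Rightarrow> nat"
  assumes "finite J"
  shows "\<exists>r. strict_mono r \<and> (\<forall>j\<in>J. incseq (\<lambda>k. f (r k) j))"
  using assms
proof (induction J rule: finite_induct)
  case empty
  then show ?case by (rule exI[of _ id]) (simp add: strict_mono_def)
next
  case (insert j J)
  then obtain r where r: "strict_mono r" "\<forall>j\<in>J. incseq (\<lambda>k. f (r k) j)" by blast
  obtain r2 where r2: "strict_mono r2" "incseq (\<lambda>k. f (r (r2 k)) j)"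
    using nat_incseq_subseq[of "\<lambda>k. f (r k) j"] by blast
  have "strict_mono (r \<circ> r2)" using r(1) r2(1) by (simp add: strict_mono_def)
  moreover have "\<forall>j'\<in>insert j J. incseq (\<lambda>k. f ((r \<circ> r2) k) j')"
  proof
    fix j' assume "j' \<in> insert j J"
    then show "incseq (\<lambda>k. f ((r \<circ> r2) k) j')"
    proof
      assume "j' = j" then show ?thesis using r2 by simp
    next
      assume "j' \<in> J"
      then have "incseq (\<lambda>k. f (r k) j')" using r(2) by blast
      then show ?thesis using r2(1) unfolding incseq_def
        by (simp add: strict_mono_less_eq)
    qed
  qed
  ultimately show ?case by blast
qed

lemma dickson_seq:
  fixes f :: "nat \<Rightarrow> 'I::finite \<Rightarrow> nat"
  shows "\<exists>i j. i < j \<and> f i \<le> f j"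
proof -
  obtain r where r: "strict_mono r" "\<forall>j\<in>UNIV. incseq (\<lambda>k. f (r k) j)"
    using dickson_subseq[of UNIV f] by auto
  have "f (r 0) \<le> f (r 1)" using r(2) by (auto simp: le_fun_def incseq_def)
  moreover have "r 0 < r 1" using r(1) by (simp add: strict_mono_def)
  ultimately show ?thesis by blast
qed

lemma dickson_basis:
  fixes M :: "('I::finite \<Rightarrow> nat) set"
  shows "\<exists>B. finite B \<and> B \<subseteq> M \<and> (\<forall>m\<in>M. \<exists>b\<in>B. b \<le> m)"
proof -
  define B where "B = {b\<in>M. \<forall>m\<in>M. m \<le> b \<longrightarrow> m = b}"
  have dom: "\<exists>b\<in>B. b \<le> m" if "m \<in> M" for m
    using that
  proof (induction "sum m UNIV" arbitrary: m rule: less_induct)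
    case less
    show ?case
    proof (cases "m \<in> B")
      case True then show ?thesis by blast
    next
      case False
      then obtain m' where m': "m' \<in> M" "m' \<le> m" "m' \<noteq> m" using less.prems unfolding B_def by blast
      have "sum m' UNIV < sum m UNIV"
      proof (rule sum_strict_mono_ex1)
        show "\<forall>x\<in>UNIV. m' x \<le> m x" using m'(2) by (simp add: le_fun_def)
        show "\<exists>a\<in>UNIV. m' a < m a" using m'(2,3) by (metis UNIV_I ext le_fun_def order_less_le)
      qed simp
      then obtain b where "b \<in> B" "b \<le> m'" using less.hyps m'(1) by blast
      then show ?thesis using m'(2) by (meson order_trans)
    qed
  qed
  have "finite B"
  proof (rule ccontr)
    assume "infinite B"
    then obtain f :: "nat \<Rightarrow> _" where f: "inj f" "range f \<subseteq> B" using infinite_countable_subset by blast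
    obtain i j where ij: "i < j" "f i \<le> f j" using dickson_seq[of f] by blast
    have "f j \<in> B" "f i \<in> M" using f(2) unfolding B_def by auto
    then have "f i = f j" using ij(2) unfolding B_def by blast
    then show False using f(1) ij(1) by (simp add: inj_eq)
  qed
  moreover have "B \<subseteq> M" unfolding B_def by blast
  ultimately show ?thesis using dom by blast
qed



lemma av_basic:
  assumes "local_field_over_Qp av p"
  shows "av 0 = 0" "\<And>x. x \<noteq> 0 \<Longrightarrow> av x > 0" "\<And>x y. av (x * y) = av x * av y"
    "\<And>x y. av (x + y) \<le> max (av x) (av y)"
  using assms unfolding local_field_over_Qp_def by blast+

lemma av_nonneg:
  assumes "local_field_over_Qp av p" shows "av x \<ge> 0"
  using av_basic[OF assms] by (cases "x = 0") (auto intro: less_imp_le)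

lemma av_minus:
  assumes "local_field_over_Qp av p" shows "av (- x) = av x"
proof -
  note b = av_basic[OF assms]
  have "av 1 = av 1 * av 1" using b(3)[of 1 1] by simp
  moreover have "av 1 > 0" using b(2)[of 1] by simp
  ultimately have a1: "av 1 = 1" by simp
  have "av (-1) * av (-1) = 1" using b(3)[of "-1" "-1"] a1 by simp
  moreover have "av (-1) > 0" using b(2)[of "-1"] by simp
  ultimately have "(av (-1) - 1) * (av (-1) + 1) = 0" "av (-1) + 1 \<noteq> 0"
    by (simp_all add: algebra_simps)
  then have "av (-1) = 1" by simp
  then show ?thesis using b(3)[of "-1" x] by simp
qed

lemma ksums_unique:
  assumes lf: "local_field_over_Qp av p"
    and s: "ksums av g S s" and t: "ksums av g S t"
  shows "s = t"
proof (rule ccontr)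
  assume "s \<noteq> t"
  note b = av_basic[OF lf]
  define e where "e = av (s - t)"
  have e: "e > 0" using \<open>s \<noteq> t\<close> b(2) unfolding e_def by simp
  have "\<exists>F0. finite F0 \<and> F0 \<subseteq> S \<and> (\<forall>F. finite F \<and> F0 \<subseteq> F \<and> F \<subseteq> S \<longrightarrow> av (s - sum g F) < e)"
    using s e unfolding ksums_def by simp
  then obtain F1 where F1: "finite F1" "F1 \<subseteq> S" "\<forall>F. finite F \<and> F1 \<subseteq> F \<and> F \<subseteq> S \<longrightarrow> av (s - sum g F) < e"
    by blast
  have "\<exists>F0. finite F0 \<and> F0 \<subseteq> S \<and> (\<forall>F. finite F \<and> F0 \<subseteq> F \<and> F \<subseteq> S \<longrightarrow> av (t - sum g F) < e)"
    using t e unfolding ksums_def by simp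
  then obtain F2 where F2: "finite F2" "F2 \<subseteq> S" "\<forall>F. finite F \<and> F2 \<subseteq> F \<and> F \<subseteq> S \<longrightarrow> av (t - sum g F) < e"
    by blast
  define FF where "FF = F1 \<union> F2"
  have FF: "finite FF \<and> F1 \<subseteq> FF \<and> FF \<subseteq> S" "finite FF \<and> F2 \<subseteq> FF \<and> FF \<subseteq> S"
    using F1(1,2) F2(1,2) unfolding FF_def by auto
  have 1: "av (s - sum g FF) < e" using F1(3) FF(1) by blast
  have 2: "av (t - sum g FF) < e" using F2(3) FF(2) by blast
  have 3: "av (sum g FF - t) = av (t - sum g FF)" using av_minus[OF lf, of "t - sum g FF"] by simp
  have "s - t = (s - sum g FF) + (sum g FF - t)" by simp
  then have "av (s - t) \<le> max (av (s - sum g FF)) (av (sum g FF - t))"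
    using b(4)[of "s - sum g FF" "sum g FF - t"] by simp
  also have "\<dots> < e" using 1 2 3 by simp
  finally show False unfolding e_def by simp
qed

lemma ksum_eqI:
  assumes "local_field_over_Qp av p" "ksums av g S s"
  shows "ksum av g S = s"
  unfolding ksum_def using assms ksums_unique by blast

lemma ksums_zero:
  assumes lf: "local_field_over_Qp av p" and "\<forall>x\<in>S. g x = 0"
  shows "ksums av g S 0"
  unfolding ksums_def
proof (intro allI impI)
  fix e :: real assume "e > 0"
  have "\<forall>F. finite F \<and> {} \<subseteq> F \<and> F \<subseteq> S \<longrightarrow> av (0 - sum g F) < e"
  proof (intro allI impI)
    fix F assume "finite F \<and> {} \<subseteq> F \<and> F \<subseteq> S"
    then have "sum g F = 0" using assms(2) by (intro sum.neutral) auto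
    then show "av (0 - sum g F) < e" using av_basic(1)[OF lf] \<open>e > 0\<close> by simp
  qed
  then show "\<exists>F0. finite F0 \<and> F0 \<subseteq> S \<and> (\<forall>F. finite F \<and> F0 \<subseteq> F \<and> F \<subseteq> S \<longrightarrow> av (0 - sum g F) < e)"
    by blast
qed

lemma ksums_single:
  assumes lf: "local_field_over_Qp av p" and "x0 \<in> S" and "\<forall>x\<in>S. x \<noteq> x0 \<longrightarrow> g x = 0"
  shows "ksums av g S (g x0)"
  unfolding ksums_def
proof (intro allI impI)
  fix e :: real assume "e > 0"
  have "\<forall>F. finite F \<and> {x0} \<subseteq> F \<and> F \<subseteq> S \<longrightarrow> av (g x0 - sum g F) < e"
  proof (intro allI impI)
    fix F assume F: "finite F \<and> {x0} \<subseteq> F \<and> F \<subseteq> S"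
    then have "sum g F = g x0 + sum g (F - {x0})" by (simp add: sum.remove)
    moreover have "sum g (F - {x0}) = 0" using assms(3) F by (intro sum.neutral) auto
    ultimately show "av (g x0 - sum g F) < e" using av_basic(1)[OF lf] \<open>e > 0\<close> by simp
  qed
  then show "\<exists>F0. finite F0 \<and> F0 \<subseteq> S \<and> (\<forall>F. finite F \<and> F0 \<subseteq> F \<and> F \<subseteq> S \<longrightarrow> av (g x0 - sum g F) < e)"
    using assms(2) by (intro exI[of _ "{x0}"]) auto
qed



lemma Dop_comm: "Dop piK w i (Dop piK w j G) = Dop piK w j (Dop piK w i G)"
proof (cases "i = j")
  case True then show ?thesis by simp
next
  case False
  show ?thesis
    unfolding Dop_def xderiv_def
    using False by (auto simp: fun_eq_iff algebra_simps fun_upd_twist)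
qed

lemma funpow_comm1:
  assumes "f \<circ> g = g \<circ> f" shows "(f ^^ a) \<circ> g = g \<circ> (f ^^ a)"
proof (induction a)
  case 0 then show ?case by simp
next
  case (Suc a)
  have "(f ^^ Suc a) \<circ> g = f \<circ> ((f ^^ a) \<circ> g)" by (simp add: comp_assoc)
  also have "\<dots> = f \<circ> (g \<circ> (f ^^ a))" by (simp only: Suc.IH)
  also have "\<dots> = (f \<circ> g) \<circ> (f ^^ a)" by (simp only: comp_assoc)
  also have "\<dots> = g \<circ> (f ^^ Suc a)" using assms by (simp add: comp_assoc)
  finally show ?case .
qed

lemma funpow_comm:
  assumes "f \<circ> g = g \<circ> f" shows "(f ^^ a) \<circ> (g ^^ b) = (g ^^ b) \<circ> (f ^^ a)"
proof -
  have "(g ^^ b) \<circ> (f ^^ a) = (f ^^ a) \<circ> (g ^^ b)"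
    by (rule funpow_comm1) (rule funpow_comm1[OF assms, symmetric])
  then show ?thesis by simp
qed

lemma dpow_cfc: "comp_fun_commute_on UNIV (\<lambda>j h. (Dop piK w j ^^ v j) \<circ> h)"
proof
  fix x y
  have c: "Dop piK w x \<circ> Dop piK w y = Dop piK w y \<circ> Dop piK w x"
    by (simp add: fun_eq_iff Dop_comm)
  show "(\<lambda>h. (Dop piK w y ^^ v y) \<circ> h) \<circ> (\<lambda>h. (Dop piK w x ^^ v x) \<circ> h) =
        (\<lambda>h. (Dop piK w x ^^ v x) \<circ> h) \<circ> (\<lambda>h. (Dop piK w y ^^ v y) \<circ> h)"
    using funpow_comm[OF c, of "v x" "v y"] by (simp add: fun_eq_iff comp_assoc[symmetric])
qed

definition HH :: "'a \<Rightarrow> ('n \<Rightarrow> int) \<Rightarrow> ('n \<Rightarrow> int) \<Rightarrow> ('N \<Rightarrow> nat) \<Rightarrow> 'a::comm_ring_1" where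
  "HH c zz = (\<lambda>z u. if u = (\<lambda>_. 0) \<and> z = zz then c else 0)"

lemma Dop_HH:
  fixes w :: "'N \<Rightarrow> 'n \<Rightarrow> int" and j :: 'N
  shows "Dop piK w j (HH c zz) = HH (piK * c) (\<lambda>i. zz i + w j i)"
proof -
  have a: "(u(j := Suc (u j))) \<noteq> (\<lambda>_. 0)" for u :: "'N \<Rightarrow> nat"
    by (metis fun_upd_same nat.distinct(1))
  have b: "((\<lambda>i. z i - w j i) = zz) = (z = (\<lambda>i. zz i + w j i))" for z
    by (auto simp: fun_eq_iff algebra_simps)
  show ?thesis unfolding Dop_def xderiv_def HH_def
    using a b by (auto simp: fun_eq_iff)
qed

lemma Dop_pow_HH: "(Dop piK w j ^^ k) (HH c zz) = HH (piK ^ k * c) (\<lambda>i. zz i + int k * w j i)"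
proof (induction k)
  case 0 then show ?case by simp
next
  case (Suc k)
  show ?case by (simp add: Suc Dop_HH algebra_simps)
qed

lemma fold_HH:
  assumes "finite S"
  shows "Finite_Set.fold (\<lambda>j h. (Dop piK w j ^^ v j) \<circ> h) id S (HH c zz)
     = HH (piK ^ (\<Sum>j\<in>S. v j) * c) (\<lambda>i. zz i + (\<Sum>j\<in>S. int (v j) * w j i))"
  using assms
proof (induction S rule: finite_induct)
  case empty then show ?case by simp
next
  case (insert j S)
  interpret comp_fun_commute_on UNIV "\<lambda>j h. (Dop piK w j ^^ v j) \<circ> h" by (rule dpow_cfc)
  have eq: "Finite_Set.fold (\<lambda>j h. (Dop piK w j ^^ v j) \<circ> h) id (insert j S)
      = (Dop piK w j ^^ v j) \<circ> Finite_Set.fold (\<lambda>j h. (Dop piK w j ^^ v j) \<circ> h) id S"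
    using insert by (simp add: fold_insert)
  have "Finite_Set.fold (\<lambda>j h. (Dop piK w j ^^ v j) \<circ> h) id (insert j S) (HH c zz)
      = (Dop piK w j ^^ v j) (Finite_Set.fold (\<lambda>j h. (Dop piK w j ^^ v j) \<circ> h) id S (HH c zz))"
    by (simp only: eq comp_apply)
  also have "\<dots> = (Dop piK w j ^^ v j) (HH (piK ^ (\<Sum>j\<in>S. v j) * c) (\<lambda>i. zz i + (\<Sum>j\<in>S. int (v j) * w j i)))"
    by (simp only: insert.IH)
  also have "\<dots> = HH (piK ^ (\<Sum>j\<in>insert j S. v j) * c) (\<lambda>i. zz i + (\<Sum>j\<in>insert j S. int (v j) * w j i))"
    using insert(1,2) by (simp add: Dop_pow_HH algebra_simps power_add)
  finally show ?case .
qed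

lemma dpow_oneL:
  "dpow piK w v (oneL :: _ \<Rightarrow> _ \<Rightarrow> 'a::comm_ring_1)
     = (\<lambda>z u. if u = (\<lambda>_. 0) \<and> z = expo w v then piK ^ mdeg v else 0)"
proof -
  have h1: "oneL = (HH (1::'a) (\<lambda>_. 0) :: _ \<Rightarrow> ('N \<Rightarrow> nat) \<Rightarrow> 'a)"
    unfolding oneL_def HH_def by (auto simp: fun_eq_iff)
  then show ?thesis unfolding dpow_def mdeg_def
    by (simp only: h1 fold_HH[OF finite_class.finite_UNIV]) (simp add: HH_def expo_def mdeg_def)
qed



lemma l1:
  fixes w :: "'N::finite \<Rightarrow> 'n::finite \<Rightarrow> int"
  shows "u *\<^sub>R (\<Sum>j\<in>UNIV. c1 j *\<^sub>R colvec w j) + v *\<^sub>R (\<Sum>j\<in>UNIV. c2 j *\<^sub>R colvec w j) = (\<Sum>j\<in>UNIV. (u * c1 j + v * c2 j) *\<^sub>R colvec w j)"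
proof -
  have "u *\<^sub>R (\<Sum>j\<in>UNIV. c1 j *\<^sub>R colvec w j) = (\<Sum>j\<in>UNIV. (u * c1 j) *\<^sub>R colvec w j)"
    by (simp only: scaleR_sum_right scaleR_scaleR)
  moreover have "v *\<^sub>R (\<Sum>j\<in>UNIV. c2 j *\<^sub>R colvec w j) = (\<Sum>j\<in>UNIV. (v * c2 j) *\<^sub>R colvec w j)"
    by (simp only: scaleR_sum_right scaleR_scaleR)
  ultimately show ?thesis by (simp only: scaleR_add_left sum.distrib)
qed
lemma l2:
  fixes w :: "'N::finite \<Rightarrow> 'n::finite \<Rightarrow> int"
  shows "(\<Sum>i\<in>UNIV. (if i = j then 1 else 0) *\<^sub>R colvec w i) = colvec w j"
proof -
  have "(\<Sum>i\<in>UNIV. (if i = j then 1 else 0) *\<^sub>R colvec w i) = (\<Sum>i\<in>UNIV. if i = j then colvec w i else 0)"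
    by (rule sum.cong) auto
  also have "\<dots> = colvec w j" by simp
  finally show ?thesis .
qed

lemma Delta_sub:
  fixes w :: "'N::finite \<Rightarrow> 'n::finite \<Rightarrow> int"
  assumes "y \<in> Delta w"
  shows "\<exists>c. (\<forall>j. 0 \<le> c j) \<and> sum c UNIV \<le> 1 \<and> y = (\<Sum>j\<in>UNIV. c j *\<^sub>R colvec w j)"
proof -
  define T where "T = {y. \<exists>c. (\<forall>j. 0 \<le> c j) \<and> sum c UNIV \<le> 1 \<and> y = (\<Sum>j\<in>UNIV. c j *\<^sub>R colvec w j)}"
  have "convex T"
    unfolding convex_def
  proof (intro ballI allI impI)
    fix x y :: "real^'n" and u v :: real
    assume x: "x \<in> T" and y: "y \<in> T" and uv: "0 \<le> u" "0 \<le> v" "u + v = 1"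
    obtain c1 where c1: "\<forall>j. 0 \<le> c1 j" "sum c1 UNIV \<le> 1" "x = (\<Sum>j\<in>UNIV. c1 j *\<^sub>R colvec w j)"
      using x unfolding T_def by blast
    obtain c2 where c2: "\<forall>j. 0 \<le> c2 j" "sum c2 UNIV \<le> 1" "y = (\<Sum>j\<in>UNIV. c2 j *\<^sub>R colvec w j)"
      using y unfolding T_def by blast
    have "\<forall>j. 0 \<le> u * c1 j + v * c2 j" using c1(1) c2(1) uv by simp
    moreover have "sum (\<lambda>j. u * c1 j + v * c2 j) UNIV \<le> 1"
    proof -
      have "sum (\<lambda>j. u * c1 j + v * c2 j) UNIV = u * sum c1 UNIV + v * sum c2 UNIV"
        by (simp add: sum.distrib sum_distrib_left)
      also have "\<dots> \<le> u * 1 + v * 1"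
        using c1(2) c2(2) uv by (intro add_mono mult_left_mono) auto
      finally show ?thesis using uv by simp
    qed
    moreover have "u *\<^sub>R x + v *\<^sub>R y = (\<Sum>j\<in>UNIV. (u * c1 j + v * c2 j) *\<^sub>R colvec w j)"
      unfolding c1(3) c2(3) by (rule l1)
    ultimately show "u *\<^sub>R x + v *\<^sub>R y \<in> T" unfolding T_def by (intro CollectI exI[of _ "\<lambda>j. u * c1 j + v * c2 j"]) simp
  qed
  moreover have "insert 0 (range (colvec w)) \<subseteq> T"
  proof
    fix x assume "x \<in> insert 0 (range (colvec w))"
    then show "x \<in> T"
    proof
      assume "x = 0" then show ?thesis unfolding T_def
        by (intro CollectI exI[of _ "\<lambda>_. 0"]) simp
    next
      assume "x \<in> range (colvec w)"
      then obtain j where j: "x = colvec w j" by blast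
      have "(\<Sum>i\<in>UNIV. (if i = j then 1 else 0) *\<^sub>R colvec w i) = colvec w j"
        by (rule l2)
      moreover have "sum (\<lambda>i. if i = j then 1 else 0::real) UNIV = 1" by simp
      ultimately show ?thesis unfolding T_def j
        by (intro CollectI exI[of _ "\<lambda>i. if i = j then 1 else 0"]) simp
    qed
  qed
  ultimately have "Delta w \<subseteq> T" unfolding Delta_def by (intro hull_minimal)
  then show ?thesis using assms unfolding T_def by blast
qed

lemma vec_expo:
  fixes w :: "'N::finite \<Rightarrow> 'n::finite \<Rightarrow> int"
  shows "(\<chi> i. real_of_int (expo w u i)) = (\<Sum>j\<in>UNIV. real (u j) *\<^sub>R colvec w j)"
  by (simp add: vec_eq_iff expo_def colvec_def)

lemma expo_in_Delta_scaled:
  fixes w :: "'N::finite \<Rightarrow> 'n::finite \<Rightarrow> int"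
  shows "\<exists>a>0. (\<chi> i. real_of_int (expo w u i)) \<in> (\<lambda>x. a *\<^sub>R x) ` Delta w"
proof (cases "mdeg u = 0")
  case True
  then have "\<forall>j. u j = 0" unfolding mdeg_def by simp
  then have "(\<chi> i. real_of_int (expo w u i)) = 0" by (simp add: vec_eq_iff expo_def)
  moreover have "(0::real^'n) \<in> Delta w" unfolding Delta_def by (simp add: hull_inc)
  ultimately show ?thesis by (intro exI[of _ 1]) auto
next
  case False
  define a where "a = real (mdeg u)"
  have a: "a > 0" using False unfolding a_def by simp
  define y where "y = (\<Sum>j\<in>UNIV. (real (u j) / a) *\<^sub>R colvec w j)"
  have "y \<in> Delta w" unfolding y_def Delta_def
  proof (rule convex_sum)
    show "convex (convex hull insert 0 (range (colvec w)))" by simp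
    show "(\<Sum>i\<in>UNIV. real (u i) / a) = 1" using a unfolding a_def mdeg_def
      by (simp add: sum_divide_distrib[symmetric])
  qed (use a in \<open>auto simp: hull_inc\<close>)
  moreover have "(\<chi> i. real_of_int (expo w u i)) = a *\<^sub>R y"
    unfolding vec_expo y_def using a by (simp add: scaleR_sum_right)
  ultimately show ?thesis using a by blast
qed

lemma expo_add: "expo w (\<lambda>j. a j + b j) = (\<lambda>i. expo w a i + expo w b i)"
  by (simp add: expo_def fun_eq_iff algebra_simps sum.distrib)

lemma short_rep:
  fixes w :: "'N::finite \<Rightarrow> 'n::finite \<Rightarrow> int"
  shows "\<exists>C. \<forall>z\<in>CA w. \<exists>v. expo w v = z \<and> real (mdeg v) \<le> dfun w z + C"
proof -
  define bnd where "bnd i = (\<Sum>j\<in>UNIV. \<bar>w j i\<bar>)" for i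
  define Q where "Q = {q::'n\<Rightarrow>int. \<forall>i. \<bar>q i\<bar> \<le> bnd i}"
  have "Q \<subseteq> PiE UNIV (\<lambda>i. {-bnd i..bnd i})" unfolding Q_def by (auto simp: abs_le_iff minus_le_iff)
  then have finQ: "finite Q" by (rule finite_subset) (intro finite_PiE; simp)
  define KK where "KK q = {k::'N\<Rightarrow>nat. \<exists>u. expo w u = (\<lambda>i. expo w k i + q i)}" for q
  have "\<forall>q. \<exists>B. finite B \<and> B \<subseteq> KK q \<and> (\<forall>m\<in>KK q. \<exists>b\<in>B. b \<le> m)"
    using dickson_basis by blast
  then have "\<exists>B. \<forall>q. finite (B q) \<and> B q \<subseteq> KK q \<and> (\<forall>m\<in>KK q. \<exists>b\<in>B q. b \<le> m)"
    by (rule choice)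
  then obtain B where BB: "\<forall>q. finite (B q) \<and> B q \<subseteq> KK q \<and> (\<forall>m\<in>KK q. \<exists>b\<in>B q. b \<le> m)"
    by blast
  have B: "\<And>q. finite (B q)" "\<And>q. B q \<subseteq> KK q" "\<And>q m. m \<in> KK q \<Longrightarrow> \<exists>b\<in>B q. b \<le> m"
    using BB by blast+
  define U where "U q b = (SOME u. expo w u = (\<lambda>i. expo w b i + q i))" for q b
  have U: "expo w (U q b) = (\<lambda>i. expo w b i + q i)" if bK0: "b \<in> KK q" for q b
  proof -
    obtain u0 where "expo w u0 = (\<lambda>i. expo w b i + q i)" using bK0 unfolding KK_def by blast
    then show ?thesis unfolding U_def by (rule someI[where P="\<lambda>u. expo w u = (\<lambda>i. expo w b i + q i)"])
  qed
  define C' where "C' = (\<Sum>q\<in>Q. \<Sum>b\<in>B q. mdeg (U q b))"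
  have C'b: "mdeg (U q b) \<le> C'" if "q \<in> Q" "b \<in> B q" for q b
  proof -
    have "mdeg (U q b) \<le> (\<Sum>b\<in>B q. mdeg (U q b))" using that B(1) by (intro member_le_sum) auto
    also have "\<dots> \<le> C'" unfolding C'_def using that finQ
      by (intro member_le_sum[where f="\<lambda>q. \<Sum>b\<in>B q. mdeg (U q b)"]) auto
    finally show ?thesis .
  qed
  have "\<exists>v. expo w v = z \<and> real (mdeg v) \<le> dfun w z + (real C' + 1)" if "z \<in> CA w" for z
  proof -
    obtain u where zu: "z = expo w u" using \<open>z \<in> CA w\<close> unfolding CA_def by blast
    define A where "A = {a. a > 0 \<and> (\<chi> i. real_of_int (z i)) \<in> (\<lambda>x. a *\<^sub>R x) ` Delta w}"
    have "A \<noteq> {}" using expo_in_Delta_scaled[of w u] unfolding A_def zu by blast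
    moreover have "dfun w z = Inf A" unfolding dfun_def A_def ..
    ultimately obtain a where a: "a \<in> A" "a < dfun w z + 1"
      using cInf_lessD[of A "Inf A + 1"] by auto
    then obtain y where y: "y \<in> Delta w" "(\<chi> i. real_of_int (z i)) = a *\<^sub>R y" and apos: "a > 0"
      unfolding A_def by blast
    obtain c where c: "\<forall>j. 0 \<le> c j" "sum c UNIV \<le> 1" "y = (\<Sum>j\<in>UNIV. c j *\<^sub>R colvec w j)"
      using Delta_sub[OF y(1)] by blast
    define c' where "c' j = a * c j" for j
    have zc: "real_of_int (z i) = (\<Sum>j\<in>UNIV. c' j * real_of_int (w j i))" for i
    proof -
      have "(\<chi> i. real_of_int (z i)) $ i = (a *\<^sub>R y) $ i" using y(2) by (rule arg_cong)
      then have "real_of_int (z i) = (a *\<^sub>R y) $ i" by simp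
      then show ?thesis unfolding c(3) c'_def
        by (simp add: colvec_def sum_distrib_left mult.assoc)
    qed
    have c'nn: "0 \<le> c' j" for j using c(1) apos unfolding c'_def by simp
    have sc': "sum c' UNIV \<le> a"
    proof -
      have "sum c' UNIV = a * sum c UNIV" unfolding c'_def by (simp add: sum_distrib_left)
      also have "\<dots> \<le> a * 1" using c(2) apos by (intro mult_left_mono) auto
      finally show ?thesis by simp
    qed
    define k where "k j = nat \<lfloor>c' j\<rfloor>" for j
    have kle: "real (k j) \<le> c' j" for j using c'nn[of j] unfolding k_def by linarith
    have kgt: "c' j < real (k j) + 1" for j using c'nn[of j] unfolding k_def by linarith
    define q where "q i = z i - expo w k i" for i
    have qQ: "q \<in> Q" unfolding Q_def
    proof (intro CollectI allI)
      fix i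
      have "real_of_int (q i) = (\<Sum>j\<in>UNIV. (c' j - real (k j)) * real_of_int (w j i))"
        unfolding q_def using zc[of i] by (simp add: expo_def algebra_simps sum_subtractf)
      then have "\<bar>real_of_int (q i)\<bar> \<le> (\<Sum>j\<in>UNIV. \<bar>(c' j - real (k j)) * real_of_int (w j i)\<bar>)"
        by (simp add: sum_abs)
      also have "\<dots> \<le> (\<Sum>j\<in>UNIV. \<bar>real_of_int (w j i)\<bar>)"
      proof (rule sum_mono)
        fix j
        have "\<bar>c' j - real (k j)\<bar> \<le> 1" using kle[of j] kgt[of j] by linarith
        then show "\<bar>(c' j - real (k j)) * real_of_int (w j i)\<bar> \<le> \<bar>real_of_int (w j i)\<bar>"
          by (simp add: abs_mult mult_left_le_one_le)
      qed
      also have "\<dots> = real_of_int (bnd i)" unfolding bnd_def by simp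
      finally show "\<bar>q i\<bar> \<le> bnd i" by linarith
    qed
    have kK: "k \<in> KK q" unfolding KK_def q_def zu by (intro CollectI exI[of _ u]) (simp add: fun_eq_iff)
    obtain b where b: "b \<in> B q" "b \<le> k" using B(3)[OF kK] by blast
    have bK: "b \<in> KK q" using b(1) B(2) by blast
    define v where "v j = U q b j + (k j - b j)" for j
    have bk: "b j \<le> k j" for j using b(2) by (simp add: le_fun_def)
    have "expo w v = z"
    proof
      fix i
      have "expo w v i = expo w (U q b) i + (\<Sum>j\<in>UNIV. int (k j - b j) * w j i)"
        unfolding v_def expo_def by (simp add: algebra_simps sum.distrib)
      also have "(\<Sum>j\<in>UNIV. int (k j - b j) * w j i) = expo w k i - expo w b i"
        unfolding expo_def using bk by (simp add: of_nat_diff algebra_simps sum_subtractf)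
      finally show "expo w v i = z i" using U[OF bK] unfolding q_def by simp
    qed
    moreover have "real (mdeg v) \<le> dfun w z + (real C' + 1)"
    proof -
      have "mdeg v = mdeg (U q b) + (\<Sum>j\<in>UNIV. k j - b j)"
        unfolding v_def mdeg_def by (simp add: sum.distrib)
      also have "\<dots> \<le> C' + mdeg k"
        using C'b[OF qQ b(1)] unfolding mdeg_def by (intro add_mono sum_mono) auto
      finally have "real (mdeg v) \<le> real C' + real (mdeg k)" by linarith
      moreover have "real (mdeg k) \<le> sum c' UNIV" unfolding mdeg_def
        by (simp add: sum_mono kle)
      ultimately show ?thesis using sc' a(2) by linarith
    qed
    ultimately show ?thesis by blast
  qed
  then show ?thesis by blast
qed

lemma xnorm_nonneg:
  fixes f :: "('N::finite \<Rightarrow> nat) \<Rightarrow> 'a::field_char_0"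
  assumes lf: "local_field_over_Qp av p" and "in_Kr av r f" and "r > 0"
  shows "0 \<le> xnorm av r f"
proof -
  have "0 \<le> av (f (\<lambda>_. 0)) * r ^ mdeg (\<lambda>_::'N. 0::nat)"
    using av_nonneg[OF lf] assms(3) by simp
  also have "\<dots> \<le> xnorm av r f" unfolding xnorm_def
    using assms(2) unfolding in_Kr_def by (intro cSUP_upper) auto
  finally show ?thesis .
qed

lemma xnorm_zero:
  assumes lf: "local_field_over_Qp av p"
  shows "xnorm av r (\<lambda>u::'N::finite \<Rightarrow> nat. 0) = 0"
  using av_basic(1)[OF lf] unfolding xnorm_def by simp

lemma in_Kr_zero:
  assumes lf: "local_field_over_Qp av p"
  shows "in_Kr av r (\<lambda>u::'N::finite \<Rightarrow> nat. 0)"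
  using av_basic(1)[OF lf] unfolding in_Kr_def by simp

lemma finite_below: "finite {u1::'N::finite \<Rightarrow> nat. \<forall>j. u1 j \<le> u j}"
proof -
  have "{u1::'N \<Rightarrow> nat. \<forall>j. u1 j \<le> u j} \<subseteq> PiE UNIV (\<lambda>j. {..u j})" by auto
  then show ?thesis by (rule finite_subset) (intro finite_PiE; simp)
qed

theorem mainTheorem9:
  fixes av :: "'a::field_char_0 \<Rightarrow> real" and p :: nat and piK :: 'a
    and w :: "'N::finite \<Rightarrow> 'n::finite \<Rightarrow> int"
  assumes "prime p"
    and "local_field_over_Qp av p"
    and "piK ^ (p - 1) + of_nat p = 0"
    and "rank ((\<chi> i j. real_of_int (w j i)) :: real^'N^'n) = CARD('n)"
  shows "(\<forall>G\<in>Ldagger av w. \<exists>F\<in>Kxy_dagger av. phi av w F = G)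
       \<and> (\<forall>G\<in>Ldagger av w. \<exists>P\<in>D_dagger av. varphi av piK w P = G)"
proof -
  note lf = assms(2)
  have piK0: "piK \<noteq> 0"
  proof
    assume "piK = 0"
    have "p \<ge> 2" using assms(1) by (rule prime_ge_2_nat)
    then have "p - 1 > 0" by simp
    then have h: "piK ^ (p - 1) = 0" using \<open>piK = 0\<close> by (simp add: zero_power)
    have "(of_nat p :: 'a) = 0" using assms(3) unfolding h by (rule trans[OF add_0_left[symmetric]])
    then show False using \<open>p \<ge> 2\<close> by simp
  qed
  obtain C where C: "\<forall>z\<in>CA w. \<exists>v. expo w v = z \<and> real (mdeg v) \<le> dfun w z + C"
    using short_rep by blast
  define vz where "vz z = (SOME v. expo w v = z \<and> real (mdeg v) \<le> dfun w z + C)" for z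
  have vz: "expo w (vz z) = z \<and> real (mdeg (vz z)) \<le> dfun w z + C" if zC: "z \<in> CA w" for z
  proof -
    have "\<exists>v. expo w v = z \<and> real (mdeg v) \<le> dfun w z + C" using C zC by (rule bspec)
    then obtain v0 where "expo w v0 = z \<and> real (mdeg v0) \<le> dfun w z + C" by (elim exE)
    then show ?thesis unfolding vz_def
      by (rule someI[where P="\<lambda>v. expo w v = z \<and> real (mdeg v) \<le> dfun w z + C"])
  qed
  have inCA: "expo w v \<in> CA w" for v unfolding CA_def by simp
  have main: "\<exists>F\<in>Kxy_dagger av. phi av w F = G \<and> varphi av piK w F = G" if G: "G \<in> Ldagger av w" for G
  proof -
    have L: "(\<forall>z. z \<notin> CA w \<longrightarrow> G z = (\<lambda>u. 0)) \<and>
        (\<exists>r>1. \<exists>s>1. (\<forall>z\<in>CA w. in_Kr av r (G z)) \<and>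
           bdd_above ((\<lambda>z. xnorm av r (G z) * s powr dfun w z) ` CA w))"
      using G unfolding Ldagger_def mem_Collect_eq .
    then have G0: "\<forall>z. z \<notin> CA w \<longrightarrow> G z = (\<lambda>u. 0)" by (rule conjunct1)
    from L obtain r s where rs: "r > 1" "s > 1" "\<forall>z\<in>CA w. in_Kr av r (G z)"
        "bdd_above ((\<lambda>z. xnorm av r (G z) * s powr dfun w z) ` CA w)"
      by (elim conjE exE)
    obtain Bd where Bd: "\<And>z. z \<in> CA w \<Longrightarrow> xnorm av r (G z) * s powr dfun w z \<le> Bd"
      using rs(4) unfolding bdd_above_def by (elim exE) (metis imageI)
    define F where "F v = (if v = vz (expo w v) then G (expo w v) else (\<lambda>u. 0))" for v
    have FK1: "\<forall>v. in_Kr av r (F v)" unfolding F_def using rs(3) inCA in_Kr_zero[OF lf] by auto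
    have FKb: "xnorm av r (F v) * s ^ mdeg v \<le> max 0 (Bd * s powr C)" for v
    proof (cases "v = vz (expo w v)")
      case True
      define z where "z = expo w v"
      have z: "z \<in> CA w" unfolding z_def by (rule inCA)
      have Fv: "F v = G z" unfolding F_def z_def using True by simp
      have xn: "0 \<le> xnorm av r (G z)" using rs(1,3) z by (intro xnorm_nonneg[OF lf]) auto
      have "s ^ mdeg v = s powr real (mdeg v)" using rs(2) by (simp add: powr_realpow)
      also have "\<dots> \<le> s powr (dfun w z + C)"
        using vz[OF z] True rs(2) unfolding z_def[symmetric] by (intro powr_mono) auto
      also have "\<dots> = s powr dfun w z * s powr C" by (simp add: powr_add)
      finally have "xnorm av r (F v) * s ^ mdeg v \<le> xnorm av r (G z) * (s powr dfun w z * s powr C)"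
        unfolding Fv using xn by (intro mult_left_mono) auto
      also have "\<dots> = (xnorm av r (G z) * s powr dfun w z) * s powr C" by (simp add: mult.assoc)
      also have "\<dots> \<le> Bd * s powr C" using Bd[OF z] by (intro mult_right_mono) auto
      finally show ?thesis by simp
    next
      case False
      then have "F v = (\<lambda>u. 0)" unfolding F_def by simp
      moreover have "xnorm av r (\<lambda>u::'N \<Rightarrow> nat. 0::'a) = 0"
        unfolding xnorm_def using av_basic(1)[OF lf] by simp
      ultimately show ?thesis by simp
    qed
    have FK2: "bdd_above (range (\<lambda>v. xnorm av r (F v) * s ^ mdeg v))"
      unfolding bdd_above_def using FKb by blast
    have FK: "F \<in> Kxy_dagger av"
      unfolding Kxy_dagger_def mem_Collect_eq using rs(1,2) FK1 FK2 by blast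
    have fib: "ksum av (\<lambda>v. F v u) {v. expo w v = z} = G z u"
      and fib2: "ksum av (\<lambda>v. if expo w v = z then F v u else 0) UNIV = G z u" for z u
    proof -
      have "ksums av (\<lambda>v. F v u) {v. expo w v = z} (G z u) \<and>
            ksums av (\<lambda>v. if expo w v = z then F v u else 0) UNIV (G z u)"
      proof (cases "z \<in> CA w")
        case True
        have e: "expo w (vz z) = z" using vz[OF True] by simp
        have Fz: "F (vz z) u = G z u" unfolding F_def e by simp
        have o: "F v u = 0" if "expo w v = z" "v \<noteq> vz z" for v
          using that unfolding F_def by simp
        have "ksums av (\<lambda>v. F v u) {v. expo w v = z} ((\<lambda>v. F v u) (vz z))"
          using e o by (intro ksums_single[OF lf]) auto
        moreover have "ksums av (\<lambda>v. if expo w v = z then F v u else 0) UNIV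
             ((\<lambda>v. if expo w v = z then F v u else 0) (vz z))"
          using e o by (intro ksums_single[OF lf]) auto
        ultimately show ?thesis using Fz e by simp
      next
        case False
        then have "G z u = 0" using G0 by simp
        moreover have "ksums av (\<lambda>v. F v u) {v. expo w v = z} 0"
          by (rule ksums_zero[OF lf]) (use False inCA in auto)
        moreover have "ksums av (\<lambda>v. if expo w v = z then F v u else 0) UNIV 0"
          by (rule ksums_zero[OF lf]) (use False inCA in auto)
        ultimately show ?thesis by simp
      qed
      then show "ksum av (\<lambda>v. F v u) {v. expo w v = z} = G z u"
        "ksum av (\<lambda>v. if expo w v = z then F v u else 0) UNIV = G z u"
        using ksum_eqI[OF lf] by blast+
    qed
    have "phi av w F = G" unfolding phi_def using fib by (simp add: fun_eq_iff)
    moreover have "varphi av piK w F = G"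
    proof (intro ext)
      fix z u
      have inner: "(\<Sum>u1\<in>{u1. \<forall>j. u1 j \<le> u j}.
              F v u1 * inverse (piK ^ mdeg v) * dpow piK w v oneL z (\<lambda>j. u j - u1 j))
            = (if expo w v = z then F v u else 0)" for v
      proof -
        have "(\<Sum>u1\<in>{u1. \<forall>j. u1 j \<le> u j}.
              F v u1 * inverse (piK ^ mdeg v) * dpow piK w v oneL z (\<lambda>j. u j - u1 j))
            = (\<Sum>u1\<in>{u1. \<forall>j. u1 j \<le> u j}. if u1 = u then
                 (if expo w v = z then F v u else 0) else 0)"
        proof (rule sum.cong)
          fix u1 assume "u1 \<in> {u1. \<forall>j. u1 j \<le> u j}"
          then have le: "\<forall>j. u1 j \<le> u j" by simp
          have "((\<lambda>j. u j - u1 j) = (\<lambda>_. 0)) = (u1 = u)"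
            using le by (auto simp: fun_eq_iff intro: antisym)
          then show "F v u1 * inverse (piK ^ mdeg v) * dpow piK w v oneL z (\<lambda>j. u j - u1 j)
              = (if u1 = u then (if expo w v = z then F v u else 0) else 0)"
            using piK0 by (auto simp: dpow_oneL)
        qed simp
        also have "\<dots> = (if expo w v = z then F v u else 0)"
          using finite_below[of u] by simp
        finally show ?thesis .
      qed
      show "varphi av piK w F z u = G z u"
        unfolding varphi_def act_def inner using fib2 by simp
    qed
    ultimately show ?thesis using FK by (intro bexI[of _ F] conjI)
  qed
  have DK: "D_dagger av = Kxy_dagger av" unfolding D_dagger_def Kxy_dagger_def ..
  show ?thesis unfolding DK
  proof (intro conjI ballI)
    fix G assume "G \<in> Ldagger av w"
    then obtain F where "F \<in> Kxy_dagger av" "phi av w F = G" "varphi av piK w F = G"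
      using main by blast
    then show "\<exists>F\<in>Kxy_dagger av. phi av w F = G" "\<exists>P\<in>Kxy_dagger av. varphi av piK w P = G"
      by blast+
  qed
qed

end
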